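(* Let $\mu$ be a centered log-concave probability measure on $\mathbb{R}^n$ with density $f$. Then for every $t\geq 6n$, $$\mu(R_t(\mu))\geq 1-e^{-t/5}.$$
   Context: A probability measure on $\mathbb{R}^n$ is log-concave (full-dimensional) if it has a density $f$ with $\ln f$ concave; it is centered if its barycenter $\int x f(x)\,dx$ is $0$. For $t\geq 0$, the super-level set is $R_t(\mu)=\{x\in\mathbb{R}^n: f(x)\geq e^{-t}\|f\|_\infty\}$. *)

theory Defs
  imports "HOL-Analysis.Analysis"
begin

definition log_concave_fun :: "('a::euclidean_space \<Rightarrow> real) \<Rightarrow> bool" where
  "log_concave_fun f \<longleftrightarrow> (\<forall>x. 0 \<le> f x) \<and>
     (\<forall>x y l. 0 < l \<and> l < 1 \<longrightarrow>
        f ((1 - l) *\<^sub>R x + l *\<^sub>R y) \<ge> f x powr (1 - l) * f y powr l)"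

definition log_concave_density :: "('a::euclidean_space \<Rightarrow> real) \<Rightarrow> bool" where
  "log_concave_density f \<longleftrightarrow> log_concave_fun f \<and> f \<in> borel_measurable lborel \<and>
     integrable lborel f \<and> integral\<^sup>L lborel f = 1"

definition centered_density :: "('a::euclidean_space \<Rightarrow> real) \<Rightarrow> bool" where
  "centered_density f \<longleftrightarrow> integrable lborel (\<lambda>x. f x *\<^sub>R x) \<and>
     integral\<^sup>L lborel (\<lambda>x. f x *\<^sub>R x) = 0"

definition sup_norm_fun :: "('a \<Rightarrow> real) \<Rightarrow> real" where
  "sup_norm_fun f = (SUP x. f x)"

definition superlevel :: "('a \<Rightarrow> real) \<Rightarrow> real \<Rightarrow> 'a set" where
  "superlevel f t = {x. f x \<ge> exp (- t) * sup_norm_fun f}"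

definition dens_measure :: "('a::euclidean_space \<Rightarrow> real) \<Rightarrow> 'a set \<Rightarrow> real" where
  "dens_measure f A = measure (density lborel (\<lambda>x. ennreal (f x))) A"

end

theory Submission
  imports Defs
begin

lemma nn_integral_affine_eucl:
  fixes f :: "'a::euclidean_space \<Rightarrow> ennreal" and c :: real
  assumes [measurable]: "f \<in> borel_measurable borel" and c: "c \<noteq> 0"
  shows "(\<integral>\<^sup>+x. f x \<partial>lborel) = ennreal (\<bar>c\<bar>^DIM('a)) * (\<integral>\<^sup>+x. f (t + c *\<^sub>R x) \<partial>lborel)"
  by (subst lborel_affine[OF c, of t])
     (simp add: nn_integral_density nn_integral_distr nn_integral_cmult)

lemma core:
  fixes f :: "'a::euclidean_space \<Rightarrow> real"
  assumes lc: "log_concave_density f" and pos: "f x0 > 0"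
  shows "ennreal (sqrt (f x0)) * (\<integral>\<^sup>+x. ennreal (sqrt (f x)) \<partial>lborel) \<le> ennreal (2^DIM('a))"
proof -
  have fm[measurable]: "f \<in> borel_measurable borel" and fi: "integrable lborel f"
    and f1: "integral\<^sup>L lborel f = 1" and nn: "\<And>x. 0 \<le> f x"
    and lcf: "\<And>x y l. 0 < l \<Longrightarrow> l < 1 \<Longrightarrow> f ((1 - l) *\<^sub>R x + l *\<^sub>R y) \<ge> f x powr (1 - l) * f y powr l"
    using lc unfolding log_concave_density_def log_concave_fun_def by auto
  have N1: "(\<integral>\<^sup>+x. ennreal (f x) \<partial>lborel) = 1"
    using nn_integral_eq_integral[OF fi] nn f1 by simp
  have "(\<integral>\<^sup>+x. ennreal (f x) \<partial>lborel) = ennreal (\<bar>1/2::real\<bar>^DIM('a)) * (\<integral>\<^sup>+x. ennreal (f ((1/2) *\<^sub>R x0 + (1/2::real) *\<^sub>R x)) \<partial>lborel)"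
    by (rule nn_integral_affine_eucl) auto
  hence h: "1 = ennreal ((1/2)^DIM('a)) * (\<integral>\<^sup>+x. ennreal (f ((1/2) *\<^sub>R x0 + (1/2::real) *\<^sub>R x)) \<partial>lborel)"
    using N1 by simp
  have eq: "(\<integral>\<^sup>+x. ennreal (f ((1/2) *\<^sub>R x0 + (1/2::real) *\<^sub>R x)) \<partial>lborel) = ennreal (2^DIM('a))"
  proof -
    have "ennreal (2^DIM('a)) = ennreal (2^DIM('a)) * (ennreal ((1/2)^DIM('a)) * (\<integral>\<^sup>+x. ennreal (f ((1/2) *\<^sub>R x0 + (1/2::real) *\<^sub>R x)) \<partial>lborel))"
      using h by (metis mult.right_neutral)
    also have "\<dots> = ennreal (2^DIM('a) * (1/2)^DIM('a)) * (\<integral>\<^sup>+x. ennreal (f ((1/2) *\<^sub>R x0 + (1/2::real) *\<^sub>R x)) \<partial>lborel)"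
      by (simp add: ennreal_mult mult.assoc)
    also have "\<dots> = (\<integral>\<^sup>+x. ennreal (f ((1/2) *\<^sub>R x0 + (1/2::real) *\<^sub>R x)) \<partial>lborel)"
      by (simp add: power_mult_distrib[symmetric])
    finally show ?thesis by simp
  qed
  have pt: "sqrt (f x0) * sqrt (f x) \<le> f ((1/2) *\<^sub>R x0 + (1/2::real) *\<^sub>R x)" for x
    using lcf[of "1/2" x0 x] nn by (simp add: powr_half_sqrt)
  have "ennreal (sqrt (f x0)) * (\<integral>\<^sup>+x. ennreal (sqrt (f x)) \<partial>lborel) = (\<integral>\<^sup>+x. ennreal (sqrt (f x0) * sqrt (f x)) \<partial>lborel)"
    by (subst nn_integral_cmult[symmetric]) (auto simp: ennreal_mult nn intro!: nn_integral_cong)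
  also have "\<dots> \<le> (\<integral>\<^sup>+x. ennreal (f ((1/2) *\<^sub>R x0 + (1/2::real) *\<^sub>R x)) \<partial>lborel)"
    by (intro nn_integral_mono ennreal_leI pt)
  finally show ?thesis using eq by simp
qed

theorem lemma3p1:
  fixes f :: "'a::euclidean_space \<Rightarrow> real" and t :: real
  assumes "log_concave_density f"
    and "centered_density f"
    and "t \<ge> 6 * real DIM('a)"
  shows "dens_measure f (superlevel f t) \<ge> 1 - exp (- t / 5)"
proof -
  note lc = assms(1)
  have fm[measurable]: "f \<in> borel_measurable borel" and fi: "integrable lborel f"
    and f1: "integral\<^sup>L lborel f = 1" and nn: "\<And>x. 0 \<le> f x"
    using lc unfolding log_concave_density_def log_concave_fun_def by auto
  define n where "n = DIM('a)"
  have n1: "real n \<ge> 1" unfolding n_def using DIM_positive[where 'a='a] by linarith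
  obtain x1 where x1: "f x1 > 0"
  proof -
    { assume "\<forall>x. \<not> f x > 0"
      hence "\<And>x. f x = 0" using nn by (metis antisym not_le)
      hence "f = (\<lambda>_. 0)" by auto
      hence "integral\<^sup>L lborel f = 0" by simp
      hence False using f1 by simp }
    thus ?thesis using that by blast
  qed
  define J where "J = (\<integral>\<^sup>+x. ennreal (sqrt (f x)) \<partial>lborel)"
  have cJ: "ennreal (sqrt (f x0)) * J \<le> ennreal (2^n)" if "f x0 > 0" for x0
    using core[OF lc that] unfolding J_def n_def .
  have Jfin: "J < \<infinity>"
  proof -
    have "ennreal (sqrt (f x1)) * J \<le> ennreal (2^n)" by (rule cJ[OF x1])
    also have "\<dots> < \<infinity>" by simp
    finally have "ennreal (sqrt (f x1)) * J < \<infinity>" .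
    thus ?thesis using x1 by (auto simp: ennreal_mult_less_top)
  qed
  have si: "integrable lborel (\<lambda>x. sqrt (f x))"
    by (rule integrableI_nonneg) (use Jfin nn in \<open>auto simp: J_def\<close>)
  define S where "S = integral\<^sup>L lborel (\<lambda>x. sqrt (f x))"
  have JS: "J = ennreal S" unfolding J_def S_def
    by (rule nn_integral_eq_integral[OF si]) (auto simp: nn)
  have S0: "S \<ge> 0" unfolding S_def by (rule integral_nonneg_AE) (auto simp: nn)
  have cS: "sqrt (f x0) * S \<le> 2^n" if "f x0 > 0" for x0
    using cJ[OF that] S0 that unfolding JS by (simp add: ennreal_mult[symmetric])
  have Spos: "S > 0"
  proof (rule ccontr)
    assume "\<not> S > 0"
    hence "S = 0" using S0 by simp
    hence "AE x in lborel. sqrt (f x) = 0" using integral_nonneg_eq_0_iff_AE[OF si] nn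
      unfolding S_def by auto
    hence "AE x in lborel. f x = 0" by auto
    hence "integral\<^sup>L lborel f = 0"
      by (rule integral_eq_zero_AE)
    thus False using f1 by simp
  qed
  have fbd: "f x \<le> (2^n / S)^2" for x
  proof (cases "f x > 0")
    case True
    have "sqrt (f x) \<le> 2^n / S" using cS[OF True] Spos by (simp add: field_simps)
    hence "(sqrt (f x))^2 \<le> (2^n / S)^2" by (intro power_mono) (auto simp: nn)
    thus ?thesis using nn by simp
  next
    case False thus ?thesis by (smt (verit) zero_le_power2)
  qed
  have bdd: "bdd_above (range f)" using fbd by (intro bdd_aboveI2) 
  define M where "M = sup_norm_fun f"
  have MS: "M = (SUP x. f x)" unfolding M_def sup_norm_fun_def ..
  have Mpos: "M > 0" using cSUP_upper[OF _ bdd, of x1] x1 unfolding MS by simp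
  have "M * exp (-1) < M" using Mpos by simp
  then obtain x0 where x0: "f x0 > M * exp (-1)"
    using less_cSUP_iff[of UNIV f "M * exp (-1)"] bdd unfolding MS by auto
  have x0p: "f x0 > 0" using x0 Mpos by (smt (verit) exp_gt_zero mult_pos_pos)
  define c where "c = exp (-t) * M"
  have c0: "c > 0" unfolding c_def using Mpos by simp
  define B where "B = {x. f x < c}"
  have Bm[measurable]: "B \<in> sets lborel" unfolding B_def by measurable
  have SL: "superlevel f t = - B" unfolding superlevel_def B_def c_def M_def by auto
  have SLm[measurable]: "- B \<in> sets lborel" using Bm by (simp add: sets.compl_sets)
  have pB: "f x * indicator B x \<le> sqrt c * sqrt (f x)" for x
  proof (cases "x \<in> B")
    case True
    hence "sqrt (f x) \<le> sqrt c" unfolding B_def by simp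
    hence "sqrt (f x) * sqrt (f x) \<le> sqrt c * sqrt (f x)" by (intro mult_right_mono) (auto simp: nn)
    thus ?thesis using True nn by (simp add: real_sqrt_mult_self)
  next
    case False thus ?thesis using nn c0 by simp
  qed
  have iB: "integrable lborel (\<lambda>x. f x * indicator B x)"
    by (rule integrable_real_mult_indicator[OF Bm fi])
  have iSL: "integrable lborel (\<lambda>x. f x * indicator (- B) x)"
    by (rule integrable_real_mult_indicator[OF SLm fi])
  have IB: "integral\<^sup>L lborel (\<lambda>x. f x * indicator B x) \<le> sqrt c * S"
  proof -
    have "integral\<^sup>L lborel (\<lambda>x. f x * indicator B x) \<le> integral\<^sup>L lborel (\<lambda>x. sqrt c * sqrt (f x))"
      by (intro integral_mono iB pB) (use si in simp)
    also have "\<dots> = sqrt c * S" unfolding S_def by simp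
    finally show ?thesis .
  qed
  have "sqrt c * S \<le> sqrt c * (2^n / sqrt (f x0))"
    using cS[OF x0p] x0p c0 by (intro mult_left_mono) (auto simp: field_simps)
  also have "\<dots> = 2^n * sqrt (c / f x0)" by (simp add: real_sqrt_divide)
  also have "\<dots> \<le> 2^n * sqrt (exp (1 - t))"
  proof -
    have "c / f x0 \<le> exp (1 - t)"
    proof -
      have "c = exp (1 - t) * (M * exp (-1))" unfolding c_def by (simp add: exp_diff exp_minus field_simps)
      also have "\<dots> \<le> exp (1 - t) * f x0" using x0 by (intro mult_left_mono) auto
      finally show ?thesis using x0p by (simp add: field_simps)
    qed
    thus ?thesis by (intro mult_left_mono) auto
  qed
  also have "\<dots> = exp (real n * ln 2 + (1 - t) / 2)"
  proof -
    have e1: "sqrt (exp (1 - t)) = exp ((1 - t) / 2)"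
      by (rule real_sqrt_unique) (simp_all add: power2_eq_square exp_add[symmetric])
    have e2: "(2::real)^n = exp (real n * ln 2)" by (simp add: exp_of_nat_mult)
    show ?thesis by (simp add: e1 e2 exp_add)
  qed
  also have "\<dots> \<le> exp (- t / 5)"
  proof -
    have h: "real n * ln 2 \<le> real n" using mult_left_le[of "ln 2" "real n"] ln_2_less_1 by simp
    have t6: "t \<ge> 6 * real n" using assms(3) unfolding n_def by simp
    have "real n * ln 2 + (1 - t) / 2 \<le> - t / 5" using h t6 n1 by argo
    thus ?thesis by simp
  qed
  finally have IBb: "integral\<^sup>L lborel (\<lambda>x. f x * indicator B x) \<le> exp (- t / 5)" using IB by linarith
  have split: "integral\<^sup>L lborel f = integral\<^sup>L lborel (\<lambda>x. f x * indicator (- B) x) + integral\<^sup>L lborel (\<lambda>x. f x * indicator B x)"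
  proof -
    have "integral\<^sup>L lborel f = integral\<^sup>L lborel (\<lambda>x. f x * indicator (- B) x + f x * indicator B x)"
      by (intro Bochner_Integration.integral_cong) (auto split: split_indicator)
    also have "\<dots> = integral\<^sup>L lborel (\<lambda>x. f x * indicator (- B) x) + integral\<^sup>L lborel (\<lambda>x. f x * indicator B x)" by (rule Bochner_Integration.integral_add[OF iSL iB])
    finally show ?thesis .
  qed
  have DM: "dens_measure f (superlevel f t) = integral\<^sup>L lborel (\<lambda>x. f x * indicator (- B) x)"
  proof -
    have "emeasure (density lborel (\<lambda>x. ennreal (f x))) (- B) = (\<integral>\<^sup>+ x. ennreal (f x) * indicator (- B) x \<partial>lborel)"
      by (rule emeasure_density) (use SLm in auto)
    also have "\<dots> = (\<integral>\<^sup>+ x. ennreal (f x * indicator (- B) x) \<partial>lborel)"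
      by (intro nn_integral_cong) (auto split: split_indicator)
    also have "\<dots> = ennreal (integral\<^sup>L lborel (\<lambda>x. f x * indicator (- B) x))"
      by (rule nn_integral_eq_integral[OF iSL]) (auto simp: nn)
    finally have "emeasure (density lborel (\<lambda>x. ennreal (f x))) (- B) = ennreal (integral\<^sup>L lborel (\<lambda>x. f x * indicator (- B) x))" .
    moreover have "integral\<^sup>L lborel (\<lambda>x. f x * indicator (- B) x) \<ge> 0"
      by (rule integral_nonneg_AE) (auto simp: nn)
    ultimately show ?thesis unfolding dens_measure_def SL measure_def by simp
  qed
  show ?thesis using DM split f1 IBb by linarith
qed

end
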